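(* For every $\lambda>\lambda^*$, $\partial_eF(\lambda,e(\lambda))>0$.
   Context: Standing setup. Let $\gamma>0$; let $a_1,\dots,a_p>0$ with weights $\omega_i>0$, $\sum_i\omega_i=1$, and $b_1,\dots,b_n>0$ with weights $\pi_j>0$, $\sum_j\pi_j=1$. Let $\mu$ be the limiting spectral distribution of $\mathbf{N}\mathbf{N}^T$ where $\mathbf{N}=\mathbf{A}^{1/2}\mathbf{G}\mathbf{B}^{1/2}$ is $k\times l$, $\mathbf{G}$ has iid mean-zero entries of variance $1/l$, $k/l\to\gamma$, and the spectral distributions of $\mathbf{A},\mathbf{B}$ converge to $\nu=\sum_i\omega_i\delta_{a_i}$ and $\underline{\nu}=\sum_j\pi_j\delta_{b_j}$. $\mu$ is a compactly supported probability measure on $[0,\infty)$; $\lambda^*>0$ is the right endpoint of its support, and $s(\lambda)=\int\frac{d\mu(t)}{t-\lambda}$ for $\lambda>\lambda^*$. Define $G(e)=\sum_{j=1}^n\frac{b_j\pi_j}{1+\gamma b_j e}$ and $F(\lambda,e)=e-\sum_{i=1}^p\frac{a_i\omega_i}{a_iG(e)-\lambda}$. It is known (master equations) that there is a smooth real function $e(\lambda)$ on $(\lambda^*,\infty)$, never equal to a pole $-1/(\gamma b_j)$ of $G$ and with $a_iG(e(\lambda))\ne\lambda$, satisfying $s(\lambda)=\sum_{i=1}^p\frac{\omega_i}{a_iG(e(\lambda))-\lambda}$ and $F(\lambda,e(\lambda))=0$. *)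

theory Defs
  imports "HOL-Probability.Probability"
begin

definition Gfun :: "real \<Rightarrow> nat \<Rightarrow> (nat \<Rightarrow> real) \<Rightarrow> (nat \<Rightarrow> real) \<Rightarrow> real \<Rightarrow> real" where
  "Gfun \<gamma> n b \<pi> e = (\<Sum>j<n. b j * \<pi> j / (1 + \<gamma> * b j * e))"

definition Ffun :: "real \<Rightarrow> nat \<Rightarrow> (nat \<Rightarrow> real) \<Rightarrow> (nat \<Rightarrow> real) \<Rightarrow> nat \<Rightarrow> (nat \<Rightarrow> real) \<Rightarrow> (nat \<Rightarrow> real)
     \<Rightarrow> real \<Rightarrow> real \<Rightarrow> real" where
  "Ffun \<gamma> p a \<omega> n b \<pi> lam e = e - (\<Sum>i<p. a i * \<omega> i / (a i * Gfun \<gamma> n b \<pi> e - lam))"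

definition msupport :: "real measure \<Rightarrow> real set" where
  "msupport M = {x. \<forall>\<epsilon>>0. emeasure M (ball x \<epsilon>) > 0}"

definition stieltjes :: "real measure \<Rightarrow> real \<Rightarrow> real" where
  "stieltjes M lam = (\<integral>t. 1 / (t - lam) \<partial>M)"

end

theory Submission
  imports Defs
begin


lemma AE_msupport:
  fixes \<mu> :: "real measure"
  assumes sb: "sets \<mu> = sets borel"
  shows "AE t in \<mu>. t \<in> msupport \<mu>"
proof -
  define F where "F = {ball x \<epsilon> | x \<epsilon>. \<epsilon> > 0 \<and> emeasure \<mu> (ball x \<epsilon>) = 0}"
  have "\<And>S. S \<in> F \<Longrightarrow> open S" unfolding F_def by auto
  then obtain F' where F': "F' \<subseteq> F" "countable F'" "\<Union>F' = \<Union>F" using Lindelof by metis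
  have "AE t in \<mu>. \<forall>B\<in>F'. t \<notin> B"
  proof (rule AE_ball_countable'[OF _ F'(2)])
    fix B assume "B \<in> F'"
    then have "B \<in> F" using F' by auto
    then obtain x \<epsilon> where B: "B = ball x \<epsilon>" "emeasure \<mu> (ball x \<epsilon>) = 0" unfolding F_def by auto
    have "B \<in> null_sets \<mu>" using B sb by (simp add: null_sets_def)
    then show "AE t in \<mu>. t \<notin> B" by (rule AE_not_in)
  qed
  then show ?thesis
  proof (rule AE_mp, intro AE_I2 impI)
    fix t assume H: "\<forall>B\<in>F'. t \<notin> B"
    show "t \<in> msupport \<mu>"
    proof (rule ccontr)
      assume "t \<notin> msupport \<mu>"
      then obtain \<epsilon> where "\<epsilon> > 0" "\<not> emeasure \<mu> (ball t \<epsilon>) > 0" unfolding msupport_def by auto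
      then have "ball t \<epsilon> \<in> F" unfolding F_def by (auto simp: not_less)
      then have "t \<in> \<Union>F'" using F'(3) \<open>\<epsilon> > 0\<close> by (metis UnionI centre_in_ball)
      then show False using H by auto
    qed
  qed
qed



lemma s_bounds:
  fixes \<mu> :: "real measure"
  assumes P: "prob_space \<mu>" and sb: "sets \<mu> = sets borel"
    and cpt: "compact (msupport \<mu>)" and nn: "msupport \<mu> \<subseteq> {0..}"
    and L: "L = Sup (msupport \<mu>)" and x: "x > L" and Lpos: "L > 0"
  shows "1/(L - x) \<le> stieltjes \<mu> x \<and> stieltjes \<mu> x \<le> -1/x"
proof -
  interpret prob_space \<mu> by (rule P)
  have bdd: "bdd_above (msupport \<mu>)" using cpt by (simp add: bounded_imp_bdd_above compact_imp_bounded)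
  have AEt: "AE t in \<mu>. 0 \<le> t \<and> t \<le> L"
    using AE_msupport[OF sb] by eventually_elim (use nn bdd L cSup_upper in auto)
  have meas: "(\<lambda>t. 1 / (t - x)) \<in> borel_measurable \<mu>"
    unfolding measurable_cong_sets[OF sb refl] by measurable
  have int: "integrable \<mu> (\<lambda>t. 1 / (t - x))"
  proof (rule integrable_const_bound[where B="1/(x-L)"])
    show "AE t in \<mu>. norm (1 / (t - x)) \<le> 1/(x-L)"
      using AEt
    proof eventually_elim
      case (elim t)
      then have "x - t \<ge> x - L" "x - L > 0" using x by auto
      then have "1/(x-t) \<le> 1/(x-L)" by (intro divide_left_mono) auto
      moreover have "norm (1/(t-x)) = 1/(x-t)" using elim x by (simp add: abs_div_pos)
      ultimately show ?case by simp
    qed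
  qed (rule meas)
  have "(\<integral>t. 1/(L - x) \<partial>\<mu>) \<le> stieltjes \<mu> x"
    unfolding stieltjes_def
  proof (rule integral_mono_AE[OF _ int])
    show "AE t in \<mu>. 1/(L-x) \<le> 1/(t-x)" using AEt
    proof eventually_elim
      case (elim t)
      then have "x - t \<ge> x - L" "x - L > 0" using x by auto
      then have "1/(x-t) \<le> 1/(x-L)" by (intro divide_left_mono) auto
      moreover have "1/(t-x) = - (1/(x-t))" by (metis minus_diff_eq divide_minus_right)
      moreover have "1/(L-x) = - (1/(x-L))" by (metis minus_diff_eq divide_minus_right)
      ultimately show ?case by simp
    qed
  qed simp
  moreover have "stieltjes \<mu> x \<le> (\<integral>t. -1/x \<partial>\<mu>)"
    unfolding stieltjes_def
  proof (rule integral_mono_AE[OF int])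
    show "AE t in \<mu>. 1/(t-x) \<le> -1/x" using AEt
    proof eventually_elim
      case (elim t)
      then have "x - t \<le> x" "x - t > 0" using x by auto
      then have "1/x \<le> 1/(x-t)" by (intro divide_left_mono) auto
      moreover have "1/(t-x) = - (1/(x-t))" by (metis minus_diff_eq divide_minus_right)
      moreover have "1/(L-x) = - (1/(x-L))" by (metis minus_diff_eq divide_minus_right)
      ultimately show ?case by simp
    qed
  qed simp
  ultimately show ?thesis by (simp add: prob_space)
qed



definition Gder :: "real \<Rightarrow> nat \<Rightarrow> (nat \<Rightarrow> real) \<Rightarrow> (nat \<Rightarrow> real) \<Rightarrow> real \<Rightarrow> real" where
  "Gder \<gamma> n b \<pi> y = - (\<Sum>j<n. \<gamma> * b j ^ 2 * \<pi> j / (1 + \<gamma> * b j * y) ^ 2)"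

definition Fe where
  "Fe \<gamma> p a \<omega> n b \<pi> lam y = 1 + (\<Sum>i<p. a i ^ 2 * \<omega> i * Gder \<gamma> n b \<pi> y / (a i * Gfun \<gamma> n b \<pi> y - lam) ^ 2)"

lemma G_deriv:
  assumes "\<And>j. j < n \<Longrightarrow> 1 + \<gamma> * b j * y \<noteq> 0"
  shows "(Gfun \<gamma> n b \<pi> has_real_derivative Gder \<gamma> n b \<pi> y) (at y)"
proof -
  have "((\<lambda>y. \<Sum>j<n. b j * \<pi> j / (1 + \<gamma> * b j * y)) has_real_derivative
     (\<Sum>j<n. - (\<gamma> * b j ^ 2 * \<pi> j / (1 + \<gamma> * b j * y) ^ 2))) (at y)"
  proof (rule DERIV_sum)
    fix j assume "j \<in> {..<n}"
    then have nz: "1 + \<gamma> * b j * y \<noteq> 0" using assms by auto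
    show "((\<lambda>y. b j * \<pi> j / (1 + \<gamma> * b j * y)) has_real_derivative
       - (\<gamma> * b j ^ 2 * \<pi> j / (1 + \<gamma> * b j * y) ^ 2)) (at y)"
      apply (rule derivative_eq_intros refl)+
      using nz by (auto simp: field_simps power2_eq_square)
  qed
  then show ?thesis unfolding Gfun_def[abs_def] Gder_def by (simp add: sum_negf)
qed

lemma G_chain:
  assumes "(f has_real_derivative f') (at x)" "\<And>j. j < n \<Longrightarrow> 1 + \<gamma> * b j * f x \<noteq> 0"
  shows "((\<lambda>x. Gfun \<gamma> n b \<pi> (f x)) has_real_derivative Gder \<gamma> n b \<pi> (f x) * f') (at x)"
  using DERIV_chain2[OF G_deriv[OF assms(2)] assms(1)] .

lemma F_deriv_y:
  assumes np: "\<And>j. j < n \<Longrightarrow> 1 + \<gamma> * b j * y \<noteq> 0"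
    and ns: "\<And>i. i < p \<Longrightarrow> a i * Gfun \<gamma> n b \<pi> y \<noteq> lam"
  shows "((\<lambda>y. Ffun \<gamma> p a \<omega> n b \<pi> lam y) has_real_derivative Fe \<gamma> p a \<omega> n b \<pi> lam y) (at y)"
proof -
  have G: "(Gfun \<gamma> n b \<pi> has_real_derivative Gder \<gamma> n b \<pi> y) (at y)" using G_deriv np by blast
  have "((\<lambda>y. \<Sum>i<p. a i * \<omega> i / (a i * Gfun \<gamma> n b \<pi> y - lam)) has_real_derivative
     (\<Sum>i<p. - (a i ^ 2 * \<omega> i * Gder \<gamma> n b \<pi> y / (a i * Gfun \<gamma> n b \<pi> y - lam) ^ 2))) (at y)"
  proof (rule DERIV_sum)
    fix i assume "i \<in> {..<p}"
    then have nz: "a i * Gfun \<gamma> n b \<pi> y - lam \<noteq> 0" using ns by auto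
    show "((\<lambda>y. a i * \<omega> i / (a i * Gfun \<gamma> n b \<pi> y - lam)) has_real_derivative
     - (a i ^ 2 * \<omega> i * Gder \<gamma> n b \<pi> y / (a i * Gfun \<gamma> n b \<pi> y - lam) ^ 2)) (at y)"
      apply (rule derivative_eq_intros G refl)+
      using nz by (auto simp: field_simps power2_eq_square)
  qed
  from DERIV_diff[OF DERIV_ident this] show ?thesis
    unfolding Ffun_def[abs_def] Fe_def by (simp add: sum_negf)
qed

lemma H_deriv:
  assumes ed: "(e has_real_derivative e') (at x)"
    and np: "\<And>j. j < n \<Longrightarrow> 1 + \<gamma> * b j * e x \<noteq> 0"
    and ns: "\<And>i. i < p \<Longrightarrow> a i * Gfun \<gamma> n b \<pi> (e x) \<noteq> x"
  shows "((\<lambda>l. Ffun \<gamma> p a \<omega> n b \<pi> l (e l)) has_real_derivative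
     e' * Fe \<gamma> p a \<omega> n b \<pi> x (e x) - (\<Sum>i<p. a i * \<omega> i / (a i * Gfun \<gamma> n b \<pi> (e x) - x) ^ 2)) (at x)"
proof -
  have G: "((\<lambda>x. Gfun \<gamma> n b \<pi> (e x)) has_real_derivative Gder \<gamma> n b \<pi> (e x) * e') (at x)"
    by (rule G_chain[OF ed]) (rule np)
  have "((\<lambda>l. \<Sum>i<p. a i * \<omega> i / (a i * Gfun \<gamma> n b \<pi> (e l) - l)) has_real_derivative
     (\<Sum>i<p. a i * \<omega> i / (a i * Gfun \<gamma> n b \<pi> (e x) - x) ^ 2
        - e' * (a i ^ 2 * \<omega> i * Gder \<gamma> n b \<pi> (e x) / (a i * Gfun \<gamma> n b \<pi> (e x) - x) ^ 2))) (at x)"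
  proof (rule DERIV_sum)
    fix i assume "i \<in> {..<p}"
    then have nz: "a i * Gfun \<gamma> n b \<pi> (e x) - x \<noteq> 0" using ns by auto
    show "((\<lambda>l. a i * \<omega> i / (a i * Gfun \<gamma> n b \<pi> (e l) - l)) has_real_derivative
     a i * \<omega> i / (a i * Gfun \<gamma> n b \<pi> (e x) - x) ^ 2
        - e' * (a i ^ 2 * \<omega> i * Gder \<gamma> n b \<pi> (e x) / (a i * Gfun \<gamma> n b \<pi> (e x) - x) ^ 2)) (at x)"
      apply (rule derivative_eq_intros G refl)+
      using nz apply (auto simp: field_simps power2_eq_square)
      by (simp only: add_divide_distrib[symmetric]) simp
  qed
  from DERIV_diff[OF ed this] show ?thesis
    unfolding Ffun_def[abs_def]
  proof (rule DERIV_cong)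
    show "e' - (\<Sum>i<p. a i * \<omega> i / (a i * Gfun \<gamma> n b \<pi> (e x) - x) ^ 2
        - e' * (a i ^ 2 * \<omega> i * Gder \<gamma> n b \<pi> (e x) / (a i * Gfun \<gamma> n b \<pi> (e x) - x) ^ 2)) =
      e' * Fe \<gamma> p a \<omega> n b \<pi> x (e x) - (\<Sum>i<p. a i * \<omega> i / (a i * Gfun \<gamma> n b \<pi> (e x) - x) ^ 2)"
      unfolding Fe_def sum_subtractf sum_distrib_left[symmetric] by (simp add: algebra_simps)
  qed
qed



lemma G_bounds:
  fixes \<gamma> :: real
  assumes g: "\<gamma> > 0" and bp: "\<And>j. j < n \<Longrightarrow> b j > 0" and pp: "\<And>j. j < n \<Longrightarrow> \<pi> j > 0"
    and p1: "\<And>j. j < n \<Longrightarrow> \<pi> j \<le> 1"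
    and B: "B = (\<Sum>j<n. b j)" and Bp: "B > 0" and y: "\<bar>y\<bar> \<le> 1 / (2 * \<gamma> * B)"
  shows "\<bar>Gfun \<gamma> n b \<pi> y\<bar> \<le> 2 * B" "\<bar>Gder \<gamma> n b \<pi> y\<bar> \<le> 4 * \<gamma> * B ^ 2"
proof -
  have bB: "b j \<le> B" if "j < n" for j
    unfolding B using that bp by (intro member_le_sum) (auto intro: less_imp_le)
  have den: "1 + \<gamma> * b j * y \<ge> 1/2" if j: "j < n" for j
  proof -
    have "\<bar>\<gamma> * b j * y\<bar> = \<gamma> * b j * \<bar>y\<bar>" using g bp[OF j] by (simp add: abs_mult)
    also have "\<dots> \<le> \<gamma> * B * (1 / (2 * \<gamma> * B))"
      using g bp[OF j] bB[OF j] y by (intro mult_mono) auto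
    also have "\<dots> = 1/2" using g Bp by simp
    finally show ?thesis by linarith
  qed
  have t1: "b j * \<pi> j / (1 + \<gamma> * b j * y) \<le> 2 * b j" "0 \<le> b j * \<pi> j / (1 + \<gamma> * b j * y)" if j: "j < n" for j
  proof -
    have d: "1 + \<gamma> * b j * y \<ge> 1/2" using den[OF j] .
    have "b j * \<pi> j \<le> b j" using bp[OF j] p1[OF j] by (simp add: mult_left_le)
    then show "b j * \<pi> j / (1 + \<gamma> * b j * y) \<le> 2 * b j"
      using d bp[OF j] by (simp add: divide_simps)
    show "0 \<le> b j * \<pi> j / (1 + \<gamma> * b j * y)" using d bp[OF j] pp[OF j] by simp
  qed
  have "\<bar>Gfun \<gamma> n b \<pi> y\<bar> = Gfun \<gamma> n b \<pi> y" unfolding Gfun_def using t1(2) by (intro abs_of_nonneg sum_nonneg) auto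
  also have "\<dots> \<le> (\<Sum>j<n. 2 * b j)" unfolding Gfun_def using t1(1) by (intro sum_mono) auto
  also have "\<dots> = 2 * B" by (simp add: B sum_distrib_left)
  finally show "\<bar>Gfun \<gamma> n b \<pi> y\<bar> \<le> 2 * B" .
  have t2: "\<gamma> * b j ^ 2 * \<pi> j / (1 + \<gamma> * b j * y) ^ 2 \<le> 4 * \<gamma> * B * b j"
           "0 \<le> \<gamma> * b j ^ 2 * \<pi> j / (1 + \<gamma> * b j * y) ^ 2" if j: "j < n" for j
  proof -
    have "(1/2) ^ 2 \<le> (1 + \<gamma> * b j * y) ^ 2" by (rule power_mono) (use den[OF j] in auto)
    then have d: "(1 + \<gamma> * b j * y) ^ 2 \<ge> 1/4" by (simp add: power2_eq_square)
    have Z: "\<gamma> * b j ^ 2 * \<pi> j \<le> \<gamma> * B * b j"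
      using g bp[OF j] p1[OF j] bB[OF j] pp[OF j]
      by (simp add: power2_eq_square mult.assoc mult_left_mono mult_le_one mult_mono)
    have Z0: "0 \<le> \<gamma> * b j ^ 2 * \<pi> j" using g pp[OF j] by simp
    have "\<gamma> * b j ^ 2 * \<pi> j / (1 + \<gamma> * b j * y) ^ 2 \<le> \<gamma> * b j ^ 2 * \<pi> j / (1/4)"
      by (rule divide_left_mono[OF d Z0]) (use d in auto)
    also have "\<dots> \<le> 4 * \<gamma> * B * b j" using Z by (simp add: algebra_simps)
    finally show "\<gamma> * b j ^ 2 * \<pi> j / (1 + \<gamma> * b j * y) ^ 2 \<le> 4 * \<gamma> * B * b j" .
    show "0 \<le> \<gamma> * b j ^ 2 * \<pi> j / (1 + \<gamma> * b j * y) ^ 2" using g pp[OF j] by simp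
  qed
  have "\<bar>Gder \<gamma> n b \<pi> y\<bar> = (\<Sum>j<n. \<gamma> * b j ^ 2 * \<pi> j / (1 + \<gamma> * b j * y) ^ 2)"
    unfolding Gder_def using t2(2) by (simp only: abs_minus_cancel, intro abs_of_nonneg sum_nonneg) auto
  also have "\<dots> \<le> (\<Sum>j<n. 4 * \<gamma> * B * b j)" using t2(1) by (intro sum_mono) auto
  also have "\<dots> = 4 * \<gamma> * B ^ 2" by (simp add: B sum_distrib_left[symmetric] power2_eq_square)
  finally show "\<bar>Gder \<gamma> n b \<pi> y\<bar> \<le> 4 * \<gamma> * B ^ 2" .
qed



lemma aux_ident: "(a::real) * g - x \<noteq> 0 \<Longrightarrow> g * (a * w / (a * g - x)) = w + x * (w / (a * g - x))"
  by (simp add: field_simps)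

theorem proposition3p11:
  fixes \<gamma> :: real and p n :: nat and a \<omega> b \<pi> :: "nat \<Rightarrow> real"
    and \<mu> :: "real measure" and lamstar :: real and e :: "real \<Rightarrow> real"
  assumes \<gamma>_pos: "\<gamma> > 0"
    and p_pos: "p \<ge> 1" and n_pos: "n \<ge> 1"
    and a_pos: "\<And>i. i < p \<Longrightarrow> a i > 0" and \<omega>_pos: "\<And>i. i < p \<Longrightarrow> \<omega> i > 0"
    and \<omega>_sum: "(\<Sum>i<p. \<omega> i) = 1"
    and b_pos: "\<And>j. j < n \<Longrightarrow> b j > 0" and \<pi>_pos: "\<And>j. j < n \<Longrightarrow> \<pi> j > 0"
    and \<pi>_sum: "(\<Sum>j<n. \<pi> j) = 1"
    and \<mu>_prob: "prob_space \<mu>" and \<mu>_borel: "sets \<mu> = sets borel"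
    and supp_compact: "compact (msupport \<mu>)"
    and supp_nonneg: "msupport \<mu> \<subseteq> {0..}"
    and lamstar_def: "lamstar = Sup (msupport \<mu>)"
    and lamstar_pos: "lamstar > 0"
    and e_smooth: "\<And>k x. x > lamstar \<Longrightarrow> ((deriv ^^ k) e) differentiable (at x)"
    and e_nonpole: "\<And>x j. x > lamstar \<Longrightarrow> j < n \<Longrightarrow> 1 + \<gamma> * b j * e x \<noteq> 0"
    and e_nonsing: "\<And>x i. x > lamstar \<Longrightarrow> i < p \<Longrightarrow> a i * Gfun \<gamma> n b \<pi> (e x) \<noteq> x"
    and master_s: "\<And>x. x > lamstar \<Longrightarrow>
        stieltjes \<mu> x = (\<Sum>i<p. \<omega> i / (a i * Gfun \<gamma> n b \<pi> (e x) - x))"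
    and master_F: "\<And>x. x > lamstar \<Longrightarrow> Ffun \<gamma> p a \<omega> n b \<pi> x (e x) = 0"
  shows "\<forall>x > lamstar. deriv (\<lambda>y. Ffun \<gamma> p a \<omega> n b \<pi> x y) (e x) > 0"
proof -
  let ?G = "Gfun \<gamma> n b \<pi>"
  let ?phi = "\<lambda>l. Fe \<gamma> p a \<omega> n b \<pi> l (e l)"
  have ediff: "(e has_real_derivative deriv e x) (at x)" if "x > lamstar" for x
    using e_smooth[of x 0] that by (simp add: DERIV_deriv_iff_real_differentiable)
  have econt: "isCont e x" if "x > lamstar" for x
    using ediff[OF that] by (rule DERIV_isCont)
  have nonzero: "?phi x \<noteq> 0" if x: "x > lamstar" for x
  proof
    assume z: "?phi x = 0"
    have D: "((\<lambda>l. Ffun \<gamma> p a \<omega> n b \<pi> l (e l)) has_real_derivative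
       deriv e x * ?phi x - (\<Sum>i<p. a i * \<omega> i / (a i * ?G (e x) - x) ^ 2)) (at x)"
      by (rule H_deriv[OF ediff[OF x]]) (use e_nonpole e_nonsing x in auto)
    have D0: "((\<lambda>l. Ffun \<gamma> p a \<omega> n b \<pi> l (e l)) has_real_derivative 0) (at x)"
    proof (rule has_field_derivative_transform_within_open[where S="{lamstar<..}"])
      show "((\<lambda>l. 0::real) has_real_derivative 0) (at x)" by simp
    qed (use x master_F in auto)
    have eq: "deriv e x * ?phi x - (\<Sum>i<p. a i * \<omega> i / (a i * ?G (e x) - x) ^ 2) = 0"
      using DERIV_unique[OF D D0] .
    have "(\<Sum>i<p. a i * \<omega> i / (a i * ?G (e x) - x) ^ 2) > 0"
    proof (rule sum_pos)
      show "{..<p} \<noteq> {}" using p_pos by (auto simp: lessThan_empty_iff)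
      fix i assume "i \<in> {..<p}"
      then have "i < p" by simp
      then show "a i * \<omega> i / (a i * ?G (e x) - x) ^ 2 > 0"
        using a_pos \<omega>_pos e_nonsing[OF x] by auto
    qed simp
    then show False using eq z by simp
  qed
  have deriv_eq: "deriv (\<lambda>y. Ffun \<gamma> p a \<omega> n b \<pi> x y) (e x) = ?phi x" if x: "x > lamstar" for x
    by (rule DERIV_imp_deriv, rule F_deriv_y) (use e_nonpole e_nonsing x in auto)
  have cont: "continuous_on {lamstar<..} ?phi"
  proof (rule continuous_at_imp_continuous_on, intro ballI)
    fix x assume "x \<in> {lamstar<..}"
    then have x: "x > lamstar" by simp
    have c1: "continuous (at x) (\<lambda>l. ?G (e l))"
      using G_chain[OF ediff[OF x], of n \<gamma> b \<pi>] e_nonpole[OF x] DERIV_isCont by blast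
    have ce: "continuous (at x) e" using econt[OF x] .
    have c2: "continuous (at x) (\<lambda>l. Gder \<gamma> n b \<pi> (e l))"
      unfolding Gder_def by (intro continuous_intros ce) (use e_nonpole[OF x] in auto)
    show "continuous (at x) ?phi"
      unfolding Fe_def by (intro continuous_intros c1 c2) (use e_nonsing[OF x] in auto)
  qed
  have pos0: "\<exists>x0>lamstar. ?phi x0 > 0"
  proof -
    define A where "A = (\<Sum>i<p. a i)"
    define B where "B = (\<Sum>j<n. b j)"
    define \<delta> where "\<delta> = 1 / (2 * \<gamma> * B)"
    define x0 where "x0 = 2 * lamstar + 4 * A * B + 4 * \<gamma> * A * B + 16 * \<gamma> * A ^ 2 * B ^ 2 + 1"
    have Ap: "A > 0" unfolding A_def using p_pos a_pos by (intro sum_pos) (auto simp: lessThan_empty_iff)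
    have Bp: "B > 0" unfolding B_def using n_pos b_pos by (intro sum_pos) (auto simp: lessThan_empty_iff)
    have aA: "a i \<le> A" if "i < p" for i
      unfolding A_def using that a_pos by (intro member_le_sum) (auto intro: less_imp_le)
    have \<omega>1: "\<omega> i \<le> 1" if "i < p" for i
      using \<omega>_sum member_le_sum[of i "{..<p}" \<omega>] that \<omega>_pos by (auto intro: less_imp_le)
    have \<pi>1: "\<pi> j \<le> 1" if "j < n" for j
      using \<pi>_sum member_le_sum[of j "{..<n}" \<pi>] that \<pi>_pos by (auto intro: less_imp_le)
    have AB: "0 < A * B" using Ap Bp by simp
    have x0L: "x0 > lamstar" "x0 \<ge> 2 * lamstar" "x0 > 4 * A * B" "x0 \<ge> 4 * \<gamma> * A * B"
      "x0 \<ge> 1 + 16 * \<gamma> * A ^ 2 * B ^ 2"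
    proof -
      have "0 \<le> \<gamma> * A * B" using AB \<gamma>_pos by (simp add: mult.assoc)
      moreover have "0 \<le> \<gamma> * A ^ 2 * B ^ 2" using \<gamma>_pos by simp
      ultimately show "x0 > lamstar" "x0 \<ge> 2 * lamstar" "x0 > 4 * A * B" "x0 \<ge> 4 * \<gamma> * A * B"
      "x0 \<ge> 1 + 16 * \<gamma> * A ^ 2 * B ^ 2" unfolding x0_def using lamstar_pos AB by linarith+
    qed
    have x0p: "x0 > 0" using x0L lamstar_pos by linarith
    have sq: "x0 ^ 2 > 16 * \<gamma> * A ^ 2 * B ^ 2"
    proof -
      have "0 \<le> \<gamma> * A ^ 2 * B ^ 2" using \<gamma>_pos by simp
      then have "x0 \<ge> 1" using x0L(5) by linarith
      then have "x0 ^ 2 \<ge> x0" by (simp add: power2_eq_square)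
      then show ?thesis using x0L(5) by linarith
    qed
    have small: "2 * A / x0 \<le> \<delta>"
    proof -
      have "2 * A = \<delta> * (4 * \<gamma> * A * B)" unfolding \<delta>_def using \<gamma>_pos Bp by (simp add: field_simps)
      also have "\<dots> \<le> \<delta> * x0" using x0L(4) \<delta>_def \<gamma>_pos Bp by (intro mult_left_mono) auto
      finally show ?thesis using x0p by (simp add: divide_simps mult.commute)
    qed
    let ?e0 = "e x0"
    let ?g = "?G (e x0)"
    define s where "s = stieltjes \<mu> x0"
    have sb: "1 / (lamstar - x0) \<le> s" "s \<le> -1 / x0"
      using s_bounds[OF \<mu>_prob \<mu>_borel supp_compact supp_nonneg lamstar_def x0L(1) lamstar_pos] s_def by auto
    have u0: "a i * ?g - x0 \<noteq> 0" if "i < p" for i using e_nonsing[OF x0L(1) that] by simp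
    define S0 where "S0 = (\<Sum>i<p. a i * \<omega> i / (a i * ?g - x0))"
    have e0: "?e0 = S0"
      using master_F[OF x0L(1)] unfolding Ffun_def S0_def by simp
    have sdef: "s = (\<Sum>i<p. \<omega> i / (a i * ?g - x0))" using master_s[OF x0L(1)] s_def by simp
    have ident: "?g * ?e0 = 1 + x0 * s"
    proof -
      have "?g * ?e0 = ?g * S0" using e0 by (rule arg_cong)
      also have "\<dots> = (\<Sum>i<p. \<omega> i + x0 * (\<omega> i / (a i * ?g - x0)))"
        unfolding S0_def sum_distrib_left
      proof (rule sum.cong[OF refl])
        fix i assume "i \<in> {..<p}"
        then have "a i * ?g - x0 \<noteq> 0" using u0 by auto
        then show "?g * (a i * \<omega> i / (a i * ?g - x0)) = \<omega> i + x0 * (\<omega> i / (a i * ?g - x0))"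
          by (rule aux_ident)
      qed
      also have "\<dots> = 1 + x0 * s" unfolding sum.distrib sdef sum_distrib_left \<omega>_sum ..
      finally show ?thesis .
    qed
    have rb: "\<bar>1 + x0 * s\<bar> \<le> 1"
    proof -
      have "x0 * s \<le> x0 * (-1 / x0)" using sb(2) x0p by (intro mult_left_mono) auto
      then have up: "1 + x0 * s \<le> 0" using x0p by simp
      have "x0 * (1 / (lamstar - x0)) \<le> x0 * s" using sb(1) x0p by (intro mult_left_mono) auto
      moreover have "x0 * (1 / (lamstar - x0)) \<ge> -2"
      proof -
        have "x0 / (x0 - lamstar) \<le> 2" using x0L by (simp add: divide_simps)
        moreover have "x0 * (1 / (lamstar - x0)) = - (x0 / (x0 - lamstar))"
          by (metis minus_diff_eq divide_minus_right times_divide_eq_right mult_1_right)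
        ultimately show ?thesis by linarith
      qed
      ultimately show ?thesis using up by linarith
    qed
    have GB: "\<bar>?G y\<bar> \<le> 2 * B" "\<bar>Gder \<gamma> n b \<pi> y\<bar> \<le> 4 * \<gamma> * B ^ 2" if "\<bar>y\<bar> \<le> \<delta>" for y
      using G_bounds[OF \<gamma>_pos b_pos \<pi>_pos \<pi>1 B_def Bp] that unfolding \<delta>_def by auto
    show ?thesis
    proof (cases "\<bar>?g\<bar> \<ge> x0 / (2 * A)")
      case True
      have "x0 / (2 * A) > 0" using x0p Ap by simp
      then have gp: "\<bar>?g\<bar> > 0" using True by linarith
      have "\<bar>?g\<bar> * \<bar>?e0\<bar> \<le> 1" using rb ident by (simp add: abs_mult[symmetric])
      then have "\<bar>?e0\<bar> \<le> 1 / \<bar>?g\<bar>" using gp by (simp add: divide_simps mult.commute)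
      also have "\<dots> \<le> 1 / (x0 / (2 * A))" using True x0p Ap gp by (intro divide_left_mono) auto
      also have "\<dots> = 2 * A / x0" by simp
      finally have "\<bar>?e0\<bar> \<le> \<delta>" using small by linarith
      then have "\<bar>?g\<bar> \<le> 2 * B" using GB(1) by blast
      moreover have "2 * B < x0 / (2 * A)" using x0L(3) Ap by (simp add: divide_simps algebra_simps)
      ultimately show ?thesis using True by linarith
    next
      case False
      then have gs: "\<bar>?g\<bar> < x0 / (2 * A)" by simp
      have ub: "\<bar>a i * ?g - x0\<bar> > x0 / 2" "a i * ?g - x0 < 0" if i: "i < p" for i
      proof -
        have "\<bar>a i * ?g\<bar> = a i * \<bar>?g\<bar>" using a_pos[OF i] by (simp add: abs_mult)
        also have "\<dots> \<le> A * \<bar>?g\<bar>" using aA[OF i] by (intro mult_right_mono) auto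
        also have "\<dots> < A * (x0 / (2 * A))" using gs Ap by (intro mult_strict_left_mono) auto
        also have "\<dots> = x0 / 2" using Ap by simp
        finally have "\<bar>a i * ?g\<bar> < x0 / 2" .
        then show "\<bar>a i * ?g - x0\<bar> > x0 / 2" "a i * ?g - x0 < 0" by linarith+
      qed
      have "\<bar>?e0\<bar> = \<bar>S0\<bar>" using e0 by (rule arg_cong)
      also have "\<dots> \<le> (\<Sum>i<p. \<bar>a i * \<omega> i / (a i * ?g - x0)\<bar>)" unfolding S0_def by (rule sum_abs)
      also have "\<dots> \<le> (\<Sum>i<p. a i * (2 / x0))"
      proof (rule sum_mono)
        fix i assume "i \<in> {..<p}"
        then have i: "i < p" by simp
        have "\<bar>a i * \<omega> i / (a i * ?g - x0)\<bar> = a i * \<omega> i / \<bar>a i * ?g - x0\<bar>"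
          using a_pos[OF i] \<omega>_pos[OF i] by (simp add: abs_mult)
        also have "\<dots> \<le> a i * \<omega> i / (x0 / 2)"
          using ub[OF i] a_pos[OF i] \<omega>_pos[OF i] x0p by (intro divide_left_mono) auto
        also have "\<dots> \<le> a i * (2 / x0)" using \<omega>1[OF i] a_pos[OF i] x0p
          by (simp add: divide_simps mult_left_le)
        finally show "\<bar>a i * \<omega> i / (a i * ?g - x0)\<bar> \<le> a i * (2 / x0)" .
      qed
      also have "\<dots> = 2 * A / x0" unfolding A_def sum_distrib_right[symmetric] by simp
      finally have "\<bar>?e0\<bar> \<le> \<delta>" using small by linarith
      then have gd: "\<bar>Gder \<gamma> n b \<pi> ?e0\<bar> \<le> 4 * \<gamma> * B ^ 2" using GB(2) by blast
      define D2 where "D2 = (\<Sum>i<p. a i ^ 2 * \<omega> i / (a i * ?g - x0) ^ 2)"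
      have phieq: "?phi x0 = 1 + Gder \<gamma> n b \<pi> ?e0 * D2"
        unfolding Fe_def D2_def sum_distrib_left by (simp add: algebra_simps)
      have D2b: "D2 \<le> (\<Sum>i<p. \<omega> i * (4 * A ^ 2 / x0 ^ 2))" unfolding D2_def
      proof (rule sum_mono)
        fix i assume "i \<in> {..<p}"
        then have i: "i < p" by simp
        have "(x0/2) ^ 2 \<le> (a i * ?g - x0) ^ 2"
        proof -
          have "(x0/2) ^ 2 \<le> \<bar>a i * ?g - x0\<bar> ^ 2" by (rule power_mono) (use ub[OF i] x0p in auto)
          then show ?thesis by simp
        qed
        then have "a i ^ 2 * \<omega> i / (a i * ?g - x0) ^ 2 \<le> a i ^ 2 * \<omega> i / ((x0/2) ^ 2)"
        proof (rule divide_left_mono)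
          have "0 < (a i * ?g - x0) ^ 2" using ub(2)[OF i] by simp
          then show "0 < (a i * ?g - x0) ^ 2 * (x0 / 2) ^ 2" using x0p by simp
        qed (use a_pos[OF i] \<omega>_pos[OF i] in auto)
        also have "\<dots> \<le> A ^ 2 * \<omega> i / ((x0/2) ^ 2)"
          using aA[OF i] a_pos[OF i] \<omega>_pos[OF i] x0p
          by (intro divide_right_mono mult_right_mono power_mono) auto
        also have "\<dots> = \<omega> i * (4 * A ^ 2 / x0 ^ 2)" by (simp add: field_simps power2_eq_square)
        finally show "a i ^ 2 * \<omega> i / (a i * ?g - x0) ^ 2 \<le> \<omega> i * (4 * A ^ 2 / x0 ^ 2)" .
      qed
      also have "\<dots> = 4 * A ^ 2 / x0 ^ 2" unfolding sum_distrib_right[symmetric] \<omega>_sum by simp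
      finally have D2b': "D2 \<le> 4 * A ^ 2 / x0 ^ 2" .
      have D2n: "D2 \<ge> 0" unfolding D2_def using \<omega>_pos by (intro sum_nonneg divide_nonneg_nonneg mult_nonneg_nonneg) (auto intro: less_imp_le)
      have "\<bar>Gder \<gamma> n b \<pi> ?e0 * D2\<bar> \<le> 4 * \<gamma> * B ^ 2 * (4 * A ^ 2 / x0 ^ 2)"
        unfolding abs_mult using gd D2b' D2n by (intro mult_mono) auto
      also have "\<dots> = 16 * \<gamma> * A ^ 2 * B ^ 2 / x0 ^ 2" by (simp add: field_simps)
      also have "\<dots> < 1" using sq x0p by (simp add: divide_simps)
      finally have "?phi x0 > 0" unfolding phieq by linarith
      then show ?thesis using x0L(1) by blast
    qed
  qed
  then obtain x0 where x0: "x0 > lamstar" "?phi x0 > 0" by blast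
  have allpos: "?phi x > 0" if x: "x > lamstar" for x
  proof (rule ccontr)
    assume "\<not> ?phi x > 0"
    then have le: "?phi x \<le> 0" by simp
    have "\<exists>c. min x x0 \<le> c \<and> c \<le> max x x0 \<and> ?phi c = 0"
    proof (cases "x \<le> x0")
      case True
      have "continuous_on {x..x0} ?phi" using cont by (rule continuous_on_subset) (use x in auto)
      then show ?thesis using IVT'[of ?phi x 0 x0] le x0 True by force
    next
      case False
      have "continuous_on {x0..x} ?phi" using cont by (rule continuous_on_subset) (use x0 in auto)
      then show ?thesis using IVT2'[of ?phi x 0 x0] le x0 False by force
    qed
    then obtain c where "min x x0 \<le> c" "?phi c = 0" by blast
    moreover have "c > lamstar" using \<open>min x x0 \<le> c\<close> x x0 by linarith
    ultimately show False using nonzero by blast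
  qed
  show ?thesis using allpos deriv_eq by auto
qed


end
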